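(* In the setting below, the intersection $\bigcap_{\nu\subseteq\{0,\dots,n\},|\nu|=n}\mathrm{Im}(P^\pi_\nu)$ is the space of all constant maps $\phi\equiv x_0$ on $X(n)$ where $x_0\in\mathbb{E}$ is a fixed point of $\pi(G)$ (i.e. $\pi(g)x_0=x_0$ for all $g\in G$).
   Context: Setting: $X$ is a pure $n$-dimensional partite simplicial complex (vertex set partitioned into $V_0,\dots,V_n$, each $n$-simplex having one vertex in each $V_i$; $\mathrm{type}(\tau)=\{i:\tau\cap V_i\neq\emptyset\}$), gallery connected (any two $n$-simplices are joined by a sequence of $n$-simplices with consecutive ones sharing an $(n-1)$-face), with all $1$-dimensional links (links of $(n-2)$-simplices) connected finite graphs. $G$ is a locally compact unimodular group with Haar measure $\mu$ acting cocompactly on $X$ by type-preserving simplicial automorphisms, with $G_\tau$ open compact for every $\tau\in X(n-2)\cup X(n-1)\cup X(n)$; $\pi$ is a strongly continuous representation of $G$ on a Banach space $\mathbb{E}$. $D(n)$ is a set of representatives of the $G$-orbits on $X(n)$. $C(X(n),\pi)$ is the space of maps $\phi:X(n)\to\mathbb{E}$ with $\phi(g.\sigma)=\pi(g)\phi(\sigma)$ for all $g,\sigma$, normed by $\|\phi\|^2=\sum_{\sigma\in D(n)}\frac{1}{\mu(G_\sigma)}|\phi(\sigma)|^2$. For $\nu\subseteq\{0,\dots,n\}$ with $|\nu|\in\{n-1,n\}$, write $\sigma\sim_\nu\sigma'$ if there is a simplex $\tau\subseteq\sigma\cap\sigma'$ with $\mathrm{type}(\tau)=\nu$, and define $P^\pi_\nu\phi(\sigma)=\frac{1}{|\{\sigma':\sigma'\sim_\nu\sigma\}|}\sum_{\sigma'\sim_\nu\sigma}\phi(\sigma')$,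 a projection on $C(X(n),\pi)$. *)

theory Defs
  imports "HOL-Analysis.Analysis" "HOL-Algebra.Group_Action"
begin

definition simplicial_complex :: "'v set set \<Rightarrow> bool" where
  "simplicial_complex X \<longleftrightarrow>
     (\<forall>\<sigma>\<in>X. finite \<sigma> \<and> \<sigma> \<noteq> {}) \<and>
     (\<forall>\<sigma>\<in>X. \<forall>\<tau>. \<tau> \<subseteq> \<sigma> \<and> \<tau> \<noteq> {} \<longrightarrow> \<tau> \<in> X)"

definition simp :: "'v set set \<Rightarrow> nat \<Rightarrow> 'v set set" where
  "simp X k = {\<sigma>\<in>X. card \<sigma> = k + 1}"

definition vertices :: "'v set set \<Rightarrow> 'v set" where
  "vertices X = \<Union>X"

definition pure_complex :: "nat \<Rightarrow> 'v set set \<Rightarrow> bool" where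
  "pure_complex n X \<longleftrightarrow> simplicial_complex X \<and>
     (\<forall>\<sigma>\<in>X. \<exists>\<sigma>'\<in>simp X n. \<sigma> \<subseteq> \<sigma>') \<and> (\<forall>\<sigma>\<in>X. card \<sigma> \<le> n + 1)"

text \<open>Partite: the vertex set is partitioned into V_0,...,V_n via the colouring
  col (V_i = vertices of colour i), and every n-simplex has exactly one vertex
  in each V_i.\<close>
definition partite :: "nat \<Rightarrow> 'v set set \<Rightarrow> ('v \<Rightarrow> nat) \<Rightarrow> bool" where
  "partite n X col \<longleftrightarrow>
     (\<forall>v\<in>vertices X. col v \<le> n) \<and>
     (\<forall>\<sigma>\<in>simp X n. \<forall>i\<le>n. card {v\<in>\<sigma>. col v = i} = 1)"

definition type_of :: "('v \<Rightarrow> nat) \<Rightarrow> 'v set \<Rightarrow> nat set" where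
  "type_of col \<tau> = col ` \<tau>"

definition gallery_adj :: "nat \<Rightarrow> 'v set set \<Rightarrow> 'v set \<Rightarrow> 'v set \<Rightarrow> bool" where
  "gallery_adj n X \<sigma> \<sigma>' \<longleftrightarrow> \<sigma> \<in> simp X n \<and> \<sigma>' \<in> simp X n \<and> card (\<sigma> \<inter> \<sigma>') = n"

definition gallery_connected :: "nat \<Rightarrow> 'v set set \<Rightarrow> bool" where
  "gallery_connected n X \<longleftrightarrow>
     (\<forall>\<sigma>\<in>simp X n. \<forall>\<sigma>'\<in>simp X n. (gallery_adj n X)\<^sup>*\<^sup>* \<sigma> \<sigma>')"

definition link :: "'v set set \<Rightarrow> 'v set \<Rightarrow> 'v set set" where
  "link X \<rho> = {\<tau>\<in>X. \<tau> \<inter> \<rho> = {} \<and> \<tau> \<union> \<rho> \<in> X}"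

text \<open>A 1-dimensional link viewed as a graph: vertices are its 0-simplices,
  edges its 1-simplices. Connected finite graph.\<close>
definition link_adj :: "'v set set \<Rightarrow> 'v set \<Rightarrow> 'v \<Rightarrow> 'v \<Rightarrow> bool" where
  "link_adj X \<rho> u w \<longleftrightarrow> {u, w} \<in> link X \<rho> \<and> u \<noteq> w"

definition connected_finite_link :: "'v set set \<Rightarrow> 'v set \<Rightarrow> bool" where
  "connected_finite_link X \<rho> \<longleftrightarrow>
     finite (vertices (link X \<rho>)) \<and>
     (\<forall>u\<in>vertices (link X \<rho>). \<forall>w\<in>vertices (link X \<rho>). (link_adj X \<rho>)\<^sup>*\<^sup>* u w)"

definition topological_group :: "('g, 'b) monoid_scheme \<Rightarrow> 'g topology \<Rightarrow> bool" where
  "topological_group G T \<longleftrightarrow> group G \<and> topspace T = carrier G \<and>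
     continuous_map (prod_topology T T) T (\<lambda>(x, y). x \<otimes>\<^bsub>G\<^esub> y) \<and>
     continuous_map T T (\<lambda>x. inv\<^bsub>G\<^esub> x)"

definition locally_compact_group :: "('g, 'b) monoid_scheme \<Rightarrow> 'g topology \<Rightarrow> bool" where
  "locally_compact_group G T \<longleftrightarrow> topological_group G T \<and> Hausdorff_space T \<and>
     locally_compact_space T"

text \<open>A (left) Haar measure on G which is also right invariant, i.e. G is
  unimodular and mu is its Haar measure.\<close>
definition bi_invariant_haar_measure ::
    "('g, 'b) monoid_scheme \<Rightarrow> 'g topology \<Rightarrow> 'g measure \<Rightarrow> bool" where
  "bi_invariant_haar_measure G T \<mu> \<longleftrightarrow>
     space \<mu> = topspace T \<and>
     sets \<mu> = sigma_sets (topspace T) {U. openin T U} \<and>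
     (\<forall>K. compactin T K \<longrightarrow> emeasure \<mu> K < \<infinity>) \<and>
     (\<forall>U. openin T U \<and> U \<noteq> {} \<longrightarrow> emeasure \<mu> U > 0) \<and>
     (\<forall>K. compactin T K \<longrightarrow> emeasure \<mu> K = (INF U\<in>{U. openin T U \<and> K \<subseteq> U}. emeasure \<mu> U)) \<and>
     (\<forall>U. openin T U \<longrightarrow> emeasure \<mu> U = (SUP K\<in>{K. compactin T K \<and> K \<subseteq> U}. emeasure \<mu> K)) \<and>
     (\<forall>g\<in>carrier G. \<forall>A\<in>sets \<mu>.
        emeasure \<mu> ((\<lambda>h. g \<otimes>\<^bsub>G\<^esub> h) ` A) = emeasure \<mu> A \<and>
        emeasure \<mu> ((\<lambda>h. h \<otimes>\<^bsub>G\<^esub> g) ` A) = emeasure \<mu> A)"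

definition simplex_stabilizer :: "('g, 'b) monoid_scheme \<Rightarrow> ('g \<Rightarrow> 'v \<Rightarrow> 'v) \<Rightarrow> 'v set \<Rightarrow> 'g set" where
  "simplex_stabilizer G act \<tau> = {g\<in>carrier G. act g ` \<tau> = \<tau>}"

definition type_preserving_simplicial_action ::
    "('g, 'b) monoid_scheme \<Rightarrow> 'v set set \<Rightarrow> ('v \<Rightarrow> nat) \<Rightarrow> ('g \<Rightarrow> 'v \<Rightarrow> 'v) \<Rightarrow> bool" where
  "type_preserving_simplicial_action G X col act \<longleftrightarrow>
     group_action G (vertices X) act \<and>
     (\<forall>g\<in>carrier G. \<forall>\<sigma>\<in>X. act g ` \<sigma> \<in> X) \<and>
     (\<forall>g\<in>carrier G. \<forall>v\<in>vertices X. col (act g v) = col v)"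

definition cocompact_action :: "('g, 'b) monoid_scheme \<Rightarrow> 'v set set \<Rightarrow> ('g \<Rightarrow> 'v \<Rightarrow> 'v) \<Rightarrow> bool" where
  "cocompact_action G X act \<longleftrightarrow>
     finite {{act g ` \<sigma> | g. g \<in> carrier G} | \<sigma>. \<sigma> \<in> X}"

definition strongly_continuous_rep ::
    "('g, 'b) monoid_scheme \<Rightarrow> 'g topology \<Rightarrow> ('g \<Rightarrow> 'e::banach \<Rightarrow> 'e) \<Rightarrow> bool" where
  "strongly_continuous_rep G T \<pi> \<longleftrightarrow>
     (\<forall>g\<in>carrier G. bounded_linear (\<pi> g)) \<and>
     \<pi> \<one>\<^bsub>G\<^esub> = id \<and>
     (\<forall>g\<in>carrier G. \<forall>h\<in>carrier G. \<pi> (g \<otimes>\<^bsub>G\<^esub> h) = \<pi> g \<circ> \<pi> h) \<and>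
     (\<forall>x. continuous_map T euclidean (\<lambda>g. \<pi> g x))"

text \<open>Maps X(n) -> E are represented as functions on vertex sets that vanish
  outside X(n).\<close>
definition equivariant_maps ::
    "nat \<Rightarrow> 'v set set \<Rightarrow> ('g, 'b) monoid_scheme \<Rightarrow> ('g \<Rightarrow> 'v \<Rightarrow> 'v) \<Rightarrow> ('g \<Rightarrow> 'e::banach \<Rightarrow> 'e)
      \<Rightarrow> ('v set \<Rightarrow> 'e) set" where
  "equivariant_maps n X G act \<pi> =
     {\<phi>. (\<forall>\<sigma>. \<sigma> \<notin> simp X n \<longrightarrow> \<phi> \<sigma> = 0) \<and>
          (\<forall>g\<in>carrier G. \<forall>\<sigma>\<in>simp X n. \<phi> (act g ` \<sigma>) = \<pi> g (\<phi> \<sigma>))}"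

definition sim_nu :: "('v \<Rightarrow> nat) \<Rightarrow> nat set \<Rightarrow> 'v set \<Rightarrow> 'v set \<Rightarrow> bool" where
  "sim_nu col \<nu> \<sigma> \<sigma>' \<longleftrightarrow> (\<exists>\<tau>. \<tau> \<subseteq> \<sigma> \<inter> \<sigma>' \<and> type_of col \<tau> = \<nu>)"

definition P_op :: "nat \<Rightarrow> 'v set set \<Rightarrow> ('v \<Rightarrow> nat) \<Rightarrow> nat set \<Rightarrow> ('v set \<Rightarrow> 'e::banach)
      \<Rightarrow> ('v set \<Rightarrow> 'e)" where
  "P_op n X col \<nu> \<phi> = (\<lambda>\<sigma>. if \<sigma> \<in> simp X n then
      (1 / real (card {\<sigma>'\<in>simp X n. sim_nu col \<nu> \<sigma>' \<sigma>})) *\<^sub>R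
        (\<Sum>\<sigma>'\<in>{\<sigma>'\<in>simp X n. sim_nu col \<nu> \<sigma>' \<sigma>}. \<phi> \<sigma>')
     else 0)"

end

theory Submission imports Defs begin

lemma col_inj:
  assumes "partite n X col" "\<sigma> \<in> simp X n"
  shows "inj_on col \<sigma>"
proof (rule inj_onI)
  fix x y assume xy: "x \<in> \<sigma>" "y \<in> \<sigma>" "col x = col y"
  have "\<sigma> \<subseteq> vertices X" using assms(2) by (auto simp: simp_def vertices_def)
  hence "col x \<le> n" using assms(1) xy by (auto simp: partite_def)
  hence "card {v\<in>\<sigma>. col v = col x} = 1" using assms by (auto simp: partite_def)
  then obtain z where "{v\<in>\<sigma>. col v = col x} = {z}" by (rule card_1_singletonE)
  thus "x = y" using xy by (metis (mono_tags, lifting) mem_Collect_eq singletonD)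
qed

lemma face_unique:
  assumes "inj_on col a" "\<tau> \<subseteq> a" "col ` \<tau> = \<nu>"
  shows "\<tau> = {v\<in>a. col v \<in> \<nu>}"
  using assms by (auto simp: inj_on_def)

lemma col_full:
  assumes "partite n X col" "\<sigma> \<in> simp X n" "\<nu> \<subseteq> {0..n}"
  shows "col ` {v\<in>\<sigma>. col v \<in> \<nu>} = \<nu>"
proof
  show "col ` {v \<in> \<sigma>. col v \<in> \<nu>} \<subseteq> \<nu>" by auto
  show "\<nu> \<subseteq> col ` {v \<in> \<sigma>. col v \<in> \<nu>}"
  proof
    fix i assume i: "i \<in> \<nu>"
    hence "card {v\<in>\<sigma>. col v = i} = 1" using assms by (auto simp: partite_def)
    then obtain z where "{v\<in>\<sigma>. col v = i} = {z}" by (rule card_1_singletonE)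
    thus "i \<in> col ` {v \<in> \<sigma>. col v \<in> \<nu>}" using i by force
  qed
qed

lemma sim_iff:
  assumes "partite n X col" "\<sigma> \<in> simp X n" "\<sigma>' \<in> simp X n" "\<nu> \<subseteq> {0..n}"
  shows "sim_nu col \<nu> \<sigma>' \<sigma> \<longleftrightarrow> {v\<in>\<sigma>'. col v \<in> \<nu>} = {v\<in>\<sigma>. col v \<in> \<nu>}"
proof
  assume "sim_nu col \<nu> \<sigma>' \<sigma>"
  then obtain \<tau> where t: "\<tau> \<subseteq> \<sigma>' \<inter> \<sigma>" "type_of col \<tau> = \<nu>" by (auto simp: sim_nu_def)
  have "\<tau> = {v\<in>\<sigma>'. col v \<in> \<nu>}"
    by (rule face_unique[OF col_inj[OF assms(1,3)]]) (use t in \<open>auto simp: type_of_def\<close>)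
  moreover have "\<tau> = {v\<in>\<sigma>. col v \<in> \<nu>}"
    by (rule face_unique[OF col_inj[OF assms(1,2)]]) (use t in \<open>auto simp: type_of_def\<close>)
  ultimately show "{v\<in>\<sigma>'. col v \<in> \<nu>} = {v\<in>\<sigma>. col v \<in> \<nu>}" by simp
next
  assume e: "{v\<in>\<sigma>'. col v \<in> \<nu>} = {v\<in>\<sigma>. col v \<in> \<nu>}"
  show "sim_nu col \<nu> \<sigma>' \<sigma>" unfolding sim_nu_def
    by (rule exI[of _ "{v\<in>\<sigma>. col v \<in> \<nu>}"])
       (use e col_full[OF assms(1,2,4)] in \<open>auto simp: type_of_def\<close>)
qed

lemma sim_refl:
  assumes "partite n X col" "\<sigma> \<in> simp X n" "\<nu> \<subseteq> {0..n}"
  shows "sim_nu col \<nu> \<sigma> \<sigma>"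
  using sim_iff[OF assms(1,2,2,3)] by simp

lemma cls_finite:
  assumes n2: "2 \<le> n" and pure: "pure_complex n X" and part: "partite n X col"
    and lk: "\<forall>\<rho>\<in>simp X (n - 2). connected_finite_link X \<rho>"
    and \<sigma>: "\<sigma> \<in> simp X n" and \<nu>: "\<nu> \<subseteq> {0..n}" "card \<nu> = n"
  shows "finite {\<sigma>'\<in>simp X n. sim_nu col \<nu> \<sigma>' \<sigma>}"
proof -
  define \<tau> where "\<tau> = {v\<in>\<sigma>. col v \<in> \<nu>}"
  have sc: "simplicial_complex X" using pure by (simp add: pure_complex_def)
  have dall: "\<forall>a\<in>X. \<forall>b. b \<subseteq> a \<and> b \<noteq> {} \<longrightarrow> b \<in> X" using sc unfolding simplicial_complex_def by (rule conjunct2)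
  have down: "b \<in> X" if "a \<in> X" "b \<subseteq> a" "b \<noteq> {}" for a b using dall that by meson
  have fs2: "\<sigma> \<in> X" "card \<sigma> = n + 1" using \<sigma> by (simp_all add: simp_def)
  have "\<forall>a\<in>X. finite a \<and> a \<noteq> {}" using sc unfolding simplicial_complex_def by (rule conjunct1)
  hence "finite \<sigma>" using fs2(1) by simp
  note fs = this fs2
  have "card \<tau> = n"
    using card_image[OF inj_on_subset[OF col_inj[OF part \<sigma>]], of \<tau>] col_full[OF part \<sigma> \<nu>(1)] \<nu>(2)
    by (simp add: \<tau>_def)
  then obtain t where t: "t \<in> \<tau>" using n2 by fastforce
  define \<rho> where "\<rho> = \<tau> - {t}"
  have ft: "finite \<tau>" using fs by (simp add: \<tau>_def)
  have "card \<rho> = n - 1" using \<open>card \<tau> = n\<close> t ft by (simp add: \<rho>_def)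
  hence "\<rho> \<noteq> {}" using n2 by auto
  moreover have "\<rho> \<subseteq> \<sigma>" by (auto simp: \<rho>_def \<tau>_def)
  ultimately have "\<rho> \<in> X" using down[OF fs(2)] by simp
  hence "\<rho> \<in> simp X (n - 2)" using \<open>card \<rho> = n - 1\<close> n2 by (simp add: simp_def)
  hence fin: "finite (vertices (link X \<rho>))" using lk by (simp add: connected_finite_link_def)
  have "{\<sigma>'\<in>simp X n. sim_nu col \<nu> \<sigma>' \<sigma>} \<subseteq> Pow (\<tau> \<union> vertices (link X \<rho>))"
  proof
    fix \<sigma>' assume s': "\<sigma>' \<in> {\<sigma>'\<in>simp X n. sim_nu col \<nu> \<sigma>' \<sigma>}"
    hence s'': "\<sigma>' \<in> simp X n" and e: "{v\<in>\<sigma>'. col v \<in> \<nu>} = \<tau>"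
      using sim_iff[OF part \<sigma> _ \<nu>(1)] by (auto simp: \<tau>_def)
    have "\<sigma>' \<in> X" using s'' by (simp add: simp_def)
    have "w \<in> \<tau> \<union> vertices (link X \<rho>)" if w: "w \<in> \<sigma>'" for w
    proof (cases "w \<in> \<tau>")
      case False
      have "{t, w} \<in> link X \<rho>" unfolding link_def
      proof (intro CollectI conjI)
        have tw: "t \<in> \<sigma>'" using t e by auto
        show "{t, w} \<in> X" by (rule down[OF \<open>\<sigma>' \<in> X\<close>]) (use tw w in simp_all)
        show "{t, w} \<inter> \<rho> = {}" using False by (auto simp: \<rho>_def)
        have "\<rho> \<subseteq> \<sigma>'" using e by (auto simp: \<rho>_def)
        thus "{t, w} \<union> \<rho> \<in> X" by (intro down[OF \<open>\<sigma>' \<in> X\<close>]) (use tw w in simp_all)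
      qed
      thus ?thesis by (auto simp: vertices_def)
    qed simp
    thus "\<sigma>' \<in> Pow (\<tau> \<union> vertices (link X \<rho>))" by auto
  qed
  moreover have "finite (Pow (\<tau> \<union> vertices (link X \<rho>)))" using ft fin by simp
  ultimately show ?thesis by (rule finite_subset)
qed


lemma tpsa_facts:
  assumes A: "type_preserving_simplicial_action G X col act" and g: "g \<in> carrier G"
  shows "inj_on (act g) (vertices X)" "inv\<^bsub>G\<^esub> g \<in> carrier G"
    "\<And>v. v \<in> vertices X \<Longrightarrow> act (inv\<^bsub>G\<^esub> g) (act g v) = v"
proof -
  have ga: "group_action G (vertices X) act" using A by (simp add: type_preserving_simplicial_action_def)
  show "inj_on (act g) (vertices X)" using group_action.inj_prop[OF ga g] .
  have "group G" using ga by (simp add: group_action_def group_hom_def)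
  thus "inv\<^bsub>G\<^esub> g \<in> carrier G" using g by simp
  show "\<And>v. v \<in> vertices X \<Longrightarrow> act (inv\<^bsub>G\<^esub> g) (act g v) = v"
    using group_action.orbit_sym_aux[OF ga g] by blast
qed

lemma act_simp:
  assumes A: "type_preserving_simplicial_action G X col act" and g: "g \<in> carrier G"
    and s: "\<sigma> \<in> simp X n"
  shows "act g ` \<sigma> \<in> simp X n"
proof -
  have sub: "\<sigma> \<subseteq> vertices X" using s by (auto simp: simp_def vertices_def)
  have "card (act g ` \<sigma>) = card \<sigma>"
    using card_image[OF inj_on_subset[OF tpsa_facts(1)[OF A g] sub]] .
  moreover have "act g ` \<sigma> \<in> X" using A g s by (auto simp: type_preserving_simplicial_action_def simp_def)
  ultimately show ?thesis using s by (simp add: simp_def)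
qed

lemma act_inv_img:
  assumes A: "type_preserving_simplicial_action G X col act" and g: "g \<in> carrier G"
    and sub: "\<sigma> \<subseteq> vertices X"
  shows "act (inv\<^bsub>G\<^esub> g) ` (act g ` \<sigma>) = \<sigma>"
proof -
  have "act (inv\<^bsub>G\<^esub> g) ` (act g ` \<sigma>) = (\<lambda>v. act (inv\<^bsub>G\<^esub> g) (act g v)) ` \<sigma>" by (simp add: image_image)
  also have "\<dots> = \<sigma>" using tpsa_facts(3)[OF A g] sub by (simp add: subset_iff)
  finally show ?thesis .
qed

lemma sim_act:
  assumes A: "type_preserving_simplicial_action G X col act" and g: "g \<in> carrier G"
    and sub: "a \<subseteq> vertices X" "b \<subseteq> vertices X" and s: "sim_nu col \<nu> a b"
  shows "sim_nu col \<nu> (act g ` a) (act g ` b)"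
proof -
  obtain \<tau> where t: "\<tau> \<subseteq> a \<inter> b" "type_of col \<tau> = \<nu>" using s by (auto simp: sim_nu_def)
  have "col ` (act g ` \<tau>) = col ` \<tau>"
    using A g t(1) sub by (force simp: type_preserving_simplicial_action_def image_image subset_iff
        intro!: image_cong)
  thus ?thesis unfolding sim_nu_def using t
    by (intro exI[of _ "act g ` \<tau>"]) (auto simp: type_of_def)
qed

lemma simp_sub: "\<sigma> \<in> simp X n \<Longrightarrow> \<sigma> \<subseteq> vertices X"
  by (auto simp: simp_def vertices_def)

lemma cls_act:
  assumes A: "type_preserving_simplicial_action G X col act" and g: "g \<in> carrier G"
    and s: "\<sigma> \<in> simp X n"
  shows "{\<sigma>'\<in>simp X n. sim_nu col \<nu> \<sigma>' (act g ` \<sigma>)} = (\<lambda>a. act g ` a) ` {\<sigma>'\<in>simp X n. sim_nu col \<nu> \<sigma>' \<sigma>}"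
proof
  show "(\<lambda>a. act g ` a) ` {\<sigma>'\<in>simp X n. sim_nu col \<nu> \<sigma>' \<sigma>} \<subseteq> {\<sigma>'\<in>simp X n. sim_nu col \<nu> \<sigma>' (act g ` \<sigma>)}"
  proof (rule image_subsetI)
    fix a assume a: "a \<in> {\<sigma>'\<in>simp X n. sim_nu col \<nu> \<sigma>' \<sigma>}"
    hence a1: "a \<in> simp X n" and a2: "sim_nu col \<nu> a \<sigma>" by simp_all
    have "act g ` a \<in> simp X n" by (rule act_simp[OF A g a1])
    moreover have "sim_nu col \<nu> (act g ` a) (act g ` \<sigma>)"
      by (rule sim_act[OF A g simp_sub[OF a1] simp_sub[OF s] a2])
    ultimately show "act g ` a \<in> {\<sigma>'\<in>simp X n. sim_nu col \<nu> \<sigma>' (act g ` \<sigma>)}" by simp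
  qed
next
  show "{\<sigma>'\<in>simp X n. sim_nu col \<nu> \<sigma>' (act g ` \<sigma>)} \<subseteq> (\<lambda>a. act g ` a) ` {\<sigma>'\<in>simp X n. sim_nu col \<nu> \<sigma>' \<sigma>}"
  proof
    fix c assume c: "c \<in> {\<sigma>'\<in>simp X n. sim_nu col \<nu> \<sigma>' (act g ` \<sigma>)}"
    define h where "h = inv\<^bsub>G\<^esub> g"
    have h: "h \<in> carrier G" using tpsa_facts(2)[OF A g] by (simp add: h_def)
    have gs: "act g ` \<sigma> \<in> simp X n" using act_simp[OF A g s] .
    have m1: "act h ` c \<in> simp X n" using act_simp[OF A h] c by simp
    have m2: "sim_nu col \<nu> (act h ` c) (act h ` (act g ` \<sigma>))"
      using sim_act[OF A h simp_sub[of c X n] simp_sub[OF gs]] c by simp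
    have m3: "act h ` (act g ` \<sigma>) = \<sigma>" using act_inv_img[OF A g simp_sub[OF s]] by (simp add: h_def)
    have m4: "act g ` (act h ` c) = c"
    proof -
      have "inv\<^bsub>G\<^esub> h = g" using tpsa_facts(2)[OF A g] A
        by (simp add: h_def type_preserving_simplicial_action_def group_action_def group_hom_def group.inv_inv g)
      thus ?thesis using act_inv_img[OF A h simp_sub, of c n] c by simp
    qed
    have m5: "act h ` c \<in> {\<sigma>'\<in>simp X n. sim_nu col \<nu> \<sigma>' \<sigma>}" using m1 m2 m3 by simp
    show "c \<in> (\<lambda>a. act g ` a) ` {\<sigma>'\<in>simp X n. sim_nu col \<nu> \<sigma>' \<sigma>}"
      by (rule image_eqI[where f="\<lambda>a. act g ` a", OF m4[symmetric] m5])
  qed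
qed

lemma P_equiv:
  assumes A: "type_preserving_simplicial_action G X col act" and g: "g \<in> carrier G"
    and s: "\<sigma> \<in> simp X n" and \<psi>: "\<psi> \<in> equivariant_maps n X G act \<pi>"
    and bl: "bounded_linear (\<pi> g)"
  shows "P_op n X col \<nu> \<psi> (act g ` \<sigma>) = \<pi> g (P_op n X col \<nu> \<psi> \<sigma>)"
proof -
  let ?C = "{\<sigma>'\<in>simp X n. sim_nu col \<nu> \<sigma>' \<sigma>}"
  have inj: "inj_on (\<lambda>a. act g ` a) ?C"
  proof (rule inj_onI)
    fix x y assume x: "x \<in> ?C" and y: "y \<in> ?C" and e: "act g ` x = act g ` y"
    have "x \<subseteq> vertices X" "y \<subseteq> vertices X" using x y simp_sub by auto
    thus "x = y" using inj_on_image_eq_iff[OF tpsa_facts(1)[OF A g]] e by simp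
  qed
  have eq: "{\<sigma>'\<in>simp X n. sim_nu col \<nu> \<sigma>' (act g ` \<sigma>)} = (\<lambda>a. act g ` a) ` ?C"
    by (rule cls_act[OF A g s])
  interpret bounded_linear "\<pi> g" by (rule bl)
  have "(\<Sum>\<sigma>'\<in>(\<lambda>a. act g ` a) ` ?C. \<psi> \<sigma>') = (\<Sum>\<sigma>'\<in>?C. \<psi> (act g ` \<sigma>'))"
    by (rule sum.reindex[OF inj, unfolded comp_def])
  also have "\<dots> = (\<Sum>\<sigma>'\<in>?C. \<pi> g (\<psi> \<sigma>'))"
    using \<psi> g by (intro sum.cong) (auto simp: equivariant_maps_def)
  finally have "(\<Sum>\<sigma>'\<in>(\<lambda>a. act g ` a) ` ?C. \<psi> \<sigma>') = \<pi> g (\<Sum>\<sigma>'\<in>?C. \<psi> \<sigma>')"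
    by (simp add: sum)
  moreover have "card ((\<lambda>a. act g ` a) ` ?C) = card ?C" by (rule card_image[OF inj])
  ultimately show ?thesis using act_simp[OF A g s] s
    by (simp add: P_op_def eq scaleR)
qed

theorem lemma3p5:
  fixes n :: nat
    and X :: "'v set set" and col :: "'v \<Rightarrow> nat"
    and G :: "('g, 'b) monoid_scheme" and T :: "'g topology" and \<mu> :: "'g measure"
    and act :: "'g \<Rightarrow> 'v \<Rightarrow> 'v" and \<pi> :: "'g \<Rightarrow> 'e::banach \<Rightarrow> 'e"
  assumes "2 \<le> n"
    and "pure_complex n X" and "partite n X col"
    and "gallery_connected n X"
    and "\<forall>\<rho>\<in>simp X (n - 2). connected_finite_link X \<rho>"
    and "locally_compact_group G T" and "bi_invariant_haar_measure G T \<mu>"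
    and "type_preserving_simplicial_action G X col act"
    and "cocompact_action G X act"
    and "\<forall>\<tau>\<in>simp X (n - 2) \<union> simp X (n - 1) \<union> simp X n.
           openin T (simplex_stabilizer G act \<tau>) \<and> compactin T (simplex_stabilizer G act \<tau>)"
    and "strongly_continuous_rep G T \<pi>"
  shows "(\<Inter>\<nu>\<in>{\<nu>. \<nu> \<subseteq> {0..n} \<and> card \<nu> = n}. P_op n X col \<nu> ` equivariant_maps n X G act \<pi>)
       = {\<phi>. \<exists>x0. (\<forall>g\<in>carrier G. \<pi> g x0 = x0) \<and>
                  \<phi> = (\<lambda>\<sigma>. if \<sigma> \<in> simp X n then x0 else 0)}"
  proof -
  note n2 = assms(1) and pure = assms(2) and part = assms(3) and gal = assms(4) and lk = assms(5)
    and A = assms(8) and rep = assms(11)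
  let ?N = "{\<nu>. \<nu> \<subseteq> {0..n} \<and> card \<nu> = n}"
  let ?E = "equivariant_maps n X G act \<pi>"
  have bl: "\<And>g. g \<in> carrier G \<Longrightarrow> bounded_linear (\<pi> g)" using rep by (simp add: strongly_continuous_rep_def)
  have \<nu>0: "{0..<n} \<in> ?N" by auto
  have cls_eq: "\<And>\<nu> b c. \<nu> \<subseteq> {0..n} \<Longrightarrow> b \<in> simp X n \<Longrightarrow> c \<in> simp X n \<Longrightarrow> sim_nu col \<nu> c b \<Longrightarrow>
      {\<sigma>'\<in>simp X n. sim_nu col \<nu> \<sigma>' b} = {\<sigma>'\<in>simp X n. sim_nu col \<nu> \<sigma>' c}"
  proof -
    fix \<nu> b c assume \<nu>: "\<nu> \<subseteq> {0..n}" and b: "b \<in> simp X n" and c: "c \<in> simp X n"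
      and cb: "sim_nu col \<nu> c b"
    have fe: "{v\<in>c. col v \<in> \<nu>} = {v\<in>b. col v \<in> \<nu>}" using sim_iff[OF part b c \<nu>] cb by simp
    have "sim_nu col \<nu> x b = sim_nu col \<nu> x c" if x: "x \<in> simp X n" for x
      using sim_iff[OF part b x \<nu>] sim_iff[OF part c x \<nu>] fe by simp
    thus "{\<sigma>'\<in>simp X n. sim_nu col \<nu> \<sigma>' b} = {\<sigma>'\<in>simp X n. sim_nu col \<nu> \<sigma>' c}"
      by (intro Collect_cong) auto
  qed
  show ?thesis
  proof
    show "(\<Inter>\<nu>\<in>?N. P_op n X col \<nu> ` ?E) \<subseteq> {\<phi>. \<exists>x0. (\<forall>g\<in>carrier G. \<pi> g x0 = x0) \<and>
                  \<phi> = (\<lambda>\<sigma>. if \<sigma> \<in> simp X n then x0 else 0)}"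
    proof
      fix \<phi> assume \<phi>: "\<phi> \<in> (\<Inter>\<nu>\<in>?N. P_op n X col \<nu> ` ?E)"
      have ex: "\<forall>\<nu>\<in>?N. \<exists>\<psi>\<in>?E. \<phi> = P_op n X col \<nu> \<psi>" using \<phi> by (simp add: image_iff)
      have adj: "\<phi> b = \<phi> c" if bc: "gallery_adj n X b c" for b c
      proof -
        have b: "b \<in> simp X n" and c: "c \<in> simp X n" and cd: "card (b \<inter> c) = n"
          using bc by (auto simp: gallery_adj_def)
        define \<nu> where "\<nu> = col ` (b \<inter> c)"
        have "\<nu> \<subseteq> {0..n}" using part simp_sub[OF b] by (auto simp: \<nu>_def partite_def)
        moreover have "card \<nu> = n" unfolding \<nu>_def
          using card_image[OF inj_on_subset[OF col_inj[OF part b], of "b \<inter> c"]] cd by simp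
        ultimately have \<nu>N: "\<nu> \<in> ?N" by simp
        then obtain \<psi> where \<phi>eq: "\<phi> = P_op n X col \<nu> \<psi>" using ex by blast
        have "sim_nu col \<nu> c b" unfolding sim_nu_def type_of_def \<nu>_def by blast
        hence "{\<sigma>'\<in>simp X n. sim_nu col \<nu> \<sigma>' b} = {\<sigma>'\<in>simp X n. sim_nu col \<nu> \<sigma>' c}"
          using cls_eq[OF _ b c] \<nu>N by simp
        thus ?thesis using b c by (simp add: \<phi>eq P_op_def)
      qed
      have const: "\<phi> b = \<phi> c" if "b \<in> simp X n" "c \<in> simp X n" for b c
      proof -
        have "(gallery_adj n X)\<^sup>*\<^sup>* b c" using gal that by (simp add: gallery_connected_def)
        thus ?thesis
        proof (induction rule: rtranclp_induct)
          case (step y z) thus ?case using adj by simp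
        qed simp
      qed
      obtain \<psi>0 where \<psi>0: "\<psi>0 \<in> ?E" "\<phi> = P_op n X col {0..<n} \<psi>0" using ex \<nu>0 by blast
      have out: "\<phi> \<sigma> = 0" if "\<sigma> \<notin> simp X n" for \<sigma> using that \<psi>0(2) by (simp add: P_op_def)
      show "\<phi> \<in> {\<phi>. \<exists>x0. (\<forall>g\<in>carrier G. \<pi> g x0 = x0) \<and> \<phi> = (\<lambda>\<sigma>. if \<sigma> \<in> simp X n then x0 else 0)}"
      proof (cases "simp X n = {}")
        case True
        have "\<forall>g\<in>carrier G. \<pi> g 0 = 0" using bl by (simp add: linear_simps)
        moreover have "\<phi> = (\<lambda>\<sigma>. if \<sigma> \<in> simp X n then 0 else 0)" using out True by auto
        ultimately show ?thesis by (intro CollectI exI[of _ 0] conjI)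
      next
        case False
        then obtain \<sigma>0 where s0: "\<sigma>0 \<in> simp X n" by auto
        have "\<pi> g (\<phi> \<sigma>0) = \<phi> \<sigma>0" if g: "g \<in> carrier G" for g
        proof -
          have "\<pi> g (\<phi> \<sigma>0) = \<phi> (act g ` \<sigma>0)"
            using P_equiv[OF A g s0 \<psi>0(1) bl[OF g]] \<psi>0(2) by simp
          also have "\<dots> = \<phi> \<sigma>0" using const[OF act_simp[OF A g s0] s0] .
          finally show ?thesis .
        qed
        moreover have "\<phi> = (\<lambda>\<sigma>. if \<sigma> \<in> simp X n then \<phi> \<sigma>0 else 0)"
        proof (rule ext)
          fix \<sigma> show "\<phi> \<sigma> = (if \<sigma> \<in> simp X n then \<phi> \<sigma>0 else 0)"
          proof (cases "\<sigma> \<in> simp X n")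
            case True thus ?thesis using const[OF True s0] by simp
          next
            case False thus ?thesis using out[OF False] by simp
          qed
        qed
        ultimately show ?thesis by (intro CollectI exI[of _ "\<phi> \<sigma>0"] conjI ballI) simp_all
      qed
    qed
  next
    show "{\<phi>. \<exists>x0. (\<forall>g\<in>carrier G. \<pi> g x0 = x0) \<and> \<phi> = (\<lambda>\<sigma>. if \<sigma> \<in> simp X n then x0 else 0)}
        \<subseteq> (\<Inter>\<nu>\<in>?N. P_op n X col \<nu> ` ?E)"
    proof
      fix \<phi> assume "\<phi> \<in> {\<phi>. \<exists>x0. (\<forall>g\<in>carrier G. \<pi> g x0 = x0) \<and> \<phi> = (\<lambda>\<sigma>. if \<sigma> \<in> simp X n then x0 else 0)}"
      then obtain x0 where fx: "\<forall>g\<in>carrier G. \<pi> g x0 = x0" and \<phi>: "\<phi> = (\<lambda>\<sigma>. if \<sigma> \<in> simp X n then x0 else 0)"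
        unfolding mem_Collect_eq by (elim exE conjE) (rule that)
      have \<phi>E: "\<phi> \<in> ?E" unfolding equivariant_maps_def \<phi> using fx act_simp[OF A] by simp
      have "\<phi> \<in> P_op n X col \<nu> ` ?E" if \<nu>: "\<nu> \<in> ?N" for \<nu>
      proof -
        have "P_op n X col \<nu> \<phi> = \<phi>"
        proof
          fix \<sigma> show "P_op n X col \<nu> \<phi> \<sigma> = \<phi> \<sigma>"
          proof (cases "\<sigma> \<in> simp X n")
            case True
            let ?C = "{\<sigma>'\<in>simp X n. sim_nu col \<nu> \<sigma>' \<sigma>}"
            have fin: "finite ?C" using cls_finite[OF n2 pure part lk True] \<nu> by simp
            have "\<sigma> \<in> ?C" using sim_refl[OF part True] \<nu> True by simp
            hence "card ?C \<noteq> 0" using fin by auto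
            moreover have "(\<Sum>\<sigma>'\<in>?C. \<phi> \<sigma>') = real (card ?C) *\<^sub>R x0"
            proof -
              have "(\<Sum>\<sigma>'\<in>?C. \<phi> \<sigma>') = (\<Sum>\<sigma>'\<in>?C. x0)" by (rule sum.cong) (simp_all add: \<phi>)
              also have "\<dots> = real (card ?C) *\<^sub>R x0" by (rule sum_constant_scaleR)
              finally show ?thesis .
            qed
            ultimately show ?thesis using True by (simp add: P_op_def \<phi>)
          qed (simp add: P_op_def \<phi>)
        qed
        thus ?thesis using \<phi>E by (metis image_eqI)
      qed
      thus "\<phi> \<in> (\<Inter>\<nu>\<in>?N. P_op n X col \<nu> ` ?E)" by (rule INT_I)
    qed
  qed
qed

end
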